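(* Let $\Pi$ be an $m$-round protocol, let $\delta\in(0,\frac12]$ and let $\xi\in(0,1)$. If $\xi\le\frac{\delta^2}{16m^2}$, then there exists $j\in\{0,1,\ldots,\lceil m/\sqrt\xi\rceil\}$ such that $\mathrm{border}_\Pi(\delta',\xi)\le m\sqrt\xi$ for $\delta'=\delta/2+2j\xi\in[\frac\delta2,\delta]$.
   Context: An $m$-round single-bit-message protocol is identified with the complete binary tree of height $m$, with leaf distribution $L_\Pi$; for a node $u$, $\mathrm{val}(\Pi_u)$ is the expected common output conditioned on the transcript starting with $u$. For $\delta,\xi$: $\mathrm{Border}^{\delta,\xi}_\Pi=\{u\text{ non-leaf}:\mathrm{val}(\Pi_u)\in(\delta-\xi,\delta+\xi]\text{ or }\mathrm{val}(\Pi_u)\in[1-\delta-\xi,1-\delta+\xi)\}$ and $\mathrm{border}_\Pi(\delta,\xi)=\Pr_{\ell\leftarrow L_\Pi}[\ell\in\mathrm{desc}(\mathrm{Border}^{\delta,\xi}_\Pi)]$, where $\mathrm{desc}(\mathcal S)$ is the set of nodes with an ancestor (possibly itself) in $\mathcal S$. *)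

theory Defs
  imports "HOL-Probability.Probability" "HOL-Library.Sublist"
begin

text \<open>An m-round single-bit-message protocol is identified with the complete binary
tree of height m: nodes are bit lists of length at most m, leaves are bit lists of
length exactly m.  The protocol is given by its leaf distribution L (a pmf on the
leaves) and the common output out l :: bool of each leaf (full transcript).\<close>

definition is_protocol :: "nat \<Rightarrow> bool list pmf \<Rightarrow> bool" where
  "is_protocol m L \<longleftrightarrow> (\<forall>l \<in> set_pmf L. length l = m)"

text \<open>val(Pi_u): expected common output conditioned on the transcript starting with u
(set to 0 by Isabelle's division convention if u has probability 0).\<close>
definition val :: "bool list pmf \<Rightarrow> (bool list \<Rightarrow> bool) \<Rightarrow> bool list \<Rightarrow> real" where
  "val L out u =
     measure_pmf.prob L {l. prefix u l \<and> out l} / measure_pmf.prob L {l. prefix u l}"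

definition Border :: "nat \<Rightarrow> bool list pmf \<Rightarrow> (bool list \<Rightarrow> bool) \<Rightarrow> real \<Rightarrow> real \<Rightarrow> bool list set" where
  "Border m L out \<delta> \<xi> =
     {u. length u < m \<and>
         ((\<delta> - \<xi> < val L out u \<and> val L out u \<le> \<delta> + \<xi>) \<or>
          (1 - \<delta> - \<xi> \<le> val L out u \<and> val L out u < 1 - \<delta> + \<xi>))}"

definition desc :: "bool list set \<Rightarrow> bool list set" where
  "desc S = {v. \<exists>u \<in> S. prefix u v}"

definition border :: "nat \<Rightarrow> bool list pmf \<Rightarrow> (bool list \<Rightarrow> bool) \<Rightarrow> real \<Rightarrow> real \<Rightarrow> real" where
  "border m L out \<delta> \<xi> = measure_pmf.prob L (desc (Border m L out \<delta> \<xi>))"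

end

theory Submission
  imports Defs
begin

definition inwin :: "real \<Rightarrow> real \<Rightarrow> real \<Rightarrow> bool" where
  "inwin d x v \<longleftrightarrow> ((d - x < v \<and> v \<le> d + x) \<or> (1 - d - x \<le> v \<and> v < 1 - d + x))"

lemma Border_inwin: "Border m L out d x = {u. length u < m \<and> inwin d x (val L out u)}"
  unfolding Border_def inwin_def by simp

lemma lower_unique:
  fixes \<delta> \<xi> v :: real and j j' :: nat
  assumes "\<xi> > 0"
    and "\<delta>/2 + 2 * real j * \<xi> - \<xi> < v" "v \<le> \<delta>/2 + 2 * real j * \<xi> + \<xi>"
    and "\<delta>/2 + 2 * real j' * \<xi> - \<xi> < v" "v \<le> \<delta>/2 + 2 * real j' * \<xi> + \<xi>"
  shows "j = j'"
proof -
  have "(2 * real j' - 1) * \<xi> < (2 * real j + 1) * \<xi>" using assms by (simp add: algebra_simps)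
  hence "2 * real j' - 1 < 2 * real j + 1" using assms(1) by (simp add: mult_less_cancel_right)
  hence a: "j' \<le> j" by linarith
  have "(2 * real j - 1) * \<xi> < (2 * real j' + 1) * \<xi>" using assms by (simp add: algebra_simps)
  hence "2 * real j - 1 < 2 * real j' + 1" using assms(1) by (simp add: mult_less_cancel_right)
  hence "j \<le> j'" by linarith
  with a show ?thesis by simp
qed

lemma upper_unique:
  fixes \<delta> \<xi> v :: real and j j' :: nat
  assumes "\<xi> > 0"
    and "1 - (\<delta>/2 + 2 * real j * \<xi>) - \<xi> \<le> v" "v < 1 - (\<delta>/2 + 2 * real j * \<xi>) + \<xi>"
    and "1 - (\<delta>/2 + 2 * real j' * \<xi>) - \<xi> \<le> v" "v < 1 - (\<delta>/2 + 2 * real j' * \<xi>) + \<xi>"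
  shows "j = j'"
proof -
  have "(2 * real j' - 1) * \<xi> < (2 * real j + 1) * \<xi>" using assms by (simp add: algebra_simps)
  hence "2 * real j' - 1 < 2 * real j + 1" using assms(1) by (simp add: mult_less_cancel_right)
  hence a: "j' \<le> j" by linarith
  have "(2 * real j - 1) * \<xi> < (2 * real j' + 1) * \<xi>" using assms by (simp add: algebra_simps)
  hence "2 * real j - 1 < 2 * real j' + 1" using assms(1) by (simp add: mult_less_cancel_right)
  hence "j \<le> j'" by linarith
  with a show ?thesis by simp
qed

lemma window_count:
  fixes \<delta> \<xi> v :: real and N :: nat
  assumes "\<xi> > 0"
  shows "(\<Sum>j\<le>N. (if inwin (\<delta>/2 + 2 * real j * \<xi>) \<xi> v then 1 else 0 :: real)) \<le> 2"
proof -
  define SL where "SL = {j \<in> {..N}. \<delta>/2 + 2 * real j * \<xi> - \<xi> < v \<and> v \<le> \<delta>/2 + 2 * real j * \<xi> + \<xi>}"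
  define SU where "SU = {j \<in> {..N}. 1 - (\<delta>/2 + 2 * real j * \<xi>) - \<xi> \<le> v \<and> v < 1 - (\<delta>/2 + 2 * real j * \<xi>) + \<xi>}"
  have cL: "card SL \<le> 1"
  proof -
    have f: "finite SL" by (simp add: SL_def)
    have "\<forall>x\<in>SL. \<forall>y\<in>SL. x = y" using lower_unique[OF assms] by (auto simp: SL_def)
    thus ?thesis using card_le_Suc0_iff_eq[OF f] by simp
  qed
  have cU: "card SU \<le> 1"
  proof -
    have f: "finite SU" by (simp add: SU_def)
    have "\<forall>x\<in>SU. \<forall>y\<in>SU. x = y" using upper_unique[OF assms] by (auto simp: SU_def)
    thus ?thesis using card_le_Suc0_iff_eq[OF f] by simp
  qed
  have "(\<Sum>j\<le>N. (if inwin (\<delta>/2 + 2 * real j * \<xi>) \<xi> v then 1 else 0 :: real))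
      = (\<Sum>j\<in>{..N}. (if j \<in> SL \<union> SU then 1 else 0 :: real))"
    by (rule sum.cong) (auto simp: inwin_def SL_def SU_def)
  also have "\<dots> = real (card (SL \<union> SU))"
  proof -
    have "SL \<union> SU \<subseteq> {..N}" by (auto simp: SL_def SU_def)
    hence "{..N} \<inter> {j. j \<in> SL \<or> j \<in> SU} = SL \<union> SU" by auto
    thus ?thesis by (simp add: sum.If_cases)
  qed
  also have "card (SL \<union> SU) \<le> card SL + card SU" by (rule card_Un_le)
  hence "real (card (SL \<union> SU)) \<le> 2" using cL cU by linarith
  finally show ?thesis .
qed


lemma ind_desc_le:
  fixes B :: "bool list set" and l :: "bool list"
  assumes "B \<subseteq> {u. length u < m}"
  shows "(indicator (desc B) l :: real) \<le> (\<Sum>k<m. indicator B (take k l))"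
proof (cases "l \<in> desc B")
  case True
  then obtain u where u: "u \<in> B" "prefix u l" by (auto simp: desc_def)
  have lu: "length u < m" using u(1) assms by auto
  have "take (length u) l = u" using u(2) by (auto simp: prefix_def)
  hence "(1::real) = indicator B (take (length u) l)" using u(1) by simp
  also have "\<dots> \<le> (\<Sum>k<m. indicator B (take k l))"
    by (rule member_le_sum) (use lu in auto)
  finally show ?thesis using True by simp
next
  case False
  thus ?thesis by (simp add: sum_nonneg)
qed

lemma leaf_bound:
  fixes l :: "bool list" and \<delta> \<xi> :: real and N :: nat
  assumes "length l = m" "\<xi> > 0"
  shows "(\<Sum>j\<le>N. indicator (desc (Border m L out (\<delta>/2 + 2*real j*\<xi>) \<xi>)) l :: real) \<le> 2 * real m"
proof -
  let ?B = "\<lambda>j. Border m L out (\<delta>/2 + 2*real j*\<xi>) \<xi>"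
  have "(\<Sum>j\<le>N. indicator (desc (?B j)) l :: real) \<le> (\<Sum>j\<le>N. \<Sum>k<m. indicator (?B j) (take k l))"
    by (rule sum_mono, rule ind_desc_le) (auto simp: Border_def)
  also have "\<dots> = (\<Sum>k<m. \<Sum>j\<le>N. indicator (?B j) (take k l))" by (rule sum.swap)
  also have "\<dots> \<le> (\<Sum>k<m. (2::real))"
  proof (rule sum_mono)
    fix k assume "k \<in> {..<m}"
    hence lk: "length (take k l) < m" using assms(1) by simp
    have "(\<Sum>j\<le>N. indicator (?B j) (take k l) :: real)
        = (\<Sum>j\<le>N. (if inwin (\<delta>/2 + 2 * real j * \<xi>) \<xi> (val L out (take k l)) then 1 else 0))"
      using lk by (intro sum.cong) (auto simp: Border_inwin indicator_def)
    also have "\<dots> \<le> 2" by (rule window_count[OF assms(2)])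
    finally show "(\<Sum>j\<le>N. indicator (?B j) (take k l) :: real) \<le> 2" .
  qed
  also have "\<dots> = 2 * real m" by simp
  finally show ?thesis .
qed

lemma sum_border_bound:
  fixes \<delta> \<xi> :: real and N :: nat
  assumes "is_protocol m L" "\<xi> > 0"
  shows "(\<Sum>j\<le>N. border m L out (\<delta>/2 + 2*real j*\<xi>) \<xi>) \<le> 2 * real m"
proof -
  let ?A = "\<lambda>j. desc (Border m L out (\<delta>/2 + 2*real j*\<xi>) \<xi>)"
  have int: "\<And>A. integrable (measure_pmf L) (indicator A :: bool list \<Rightarrow> real)"
    by (rule measure_pmf.integrable_const_bound[where B=1]) (auto simp: indicator_def)
  have "(\<Sum>j\<le>N. border m L out (\<delta>/2 + 2*real j*\<xi>) \<xi>)
      = (\<Sum>j\<le>N. integral\<^sup>L (measure_pmf L) (indicator (?A j)))"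
    by (simp add: border_def)
  also have "\<dots> = integral\<^sup>L (measure_pmf L) (\<lambda>l. \<Sum>j\<le>N. indicator (?A j) l)"
    using Bochner_Integration.integral_sum[of "{..N}" "measure_pmf L" "\<lambda>j. indicator (?A j)"] int
    by simp
  also have "\<dots> \<le> integral\<^sup>L (measure_pmf L) (\<lambda>l. 2 * real m)"
  proof (rule integral_mono_AE)
    show "integrable (measure_pmf L) (\<lambda>l. \<Sum>j\<le>N. indicator (?A j) l :: real)"
      using int by simp
    show "integrable (measure_pmf L) (\<lambda>l. 2 * real m)" by simp
    show "AE l in measure_pmf L. (\<Sum>j\<le>N. indicator (?A j) l :: real) \<le> 2 * real m"
      by (rule AE_pmfI, rule leaf_bound) (use assms in \<open>auto simp: is_protocol_def\<close>)
  qed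
  also have "\<dots> = 2 * real m" by simp
  finally show ?thesis .
qed

theorem lemma4p26:
  fixes m :: nat and L :: "bool list pmf" and out :: "bool list \<Rightarrow> bool"
    and \<delta> \<xi> :: real
  assumes "is_protocol m L"
    and "0 < \<delta>" and "\<delta> \<le> 1/2"
    and "0 < \<xi>" and "\<xi> < 1"
    and "\<xi> \<le> \<delta>^2 / (16 * (real m)^2)"
  shows "\<exists>j::nat. j \<le> nat \<lceil>real m / sqrt \<xi>\<rceil> \<and>
           border m L out (\<delta>/2 + 2 * real j * \<xi>) \<xi> \<le> real m * sqrt \<xi>"
proof (rule ccontr)
  assume H: "\<not> ?thesis"
  define N where "N = nat \<lceil>real m / sqrt \<xi>\<rceil>"
  have bad: "\<And>j. j \<le> N \<Longrightarrow> border m L out (\<delta>/2 + 2 * real j * \<xi>) \<xi> > real m * sqrt \<xi>"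
    using H unfolding N_def by force
  have m0: "m \<noteq> 0"
  proof
    assume "m = 0" thus False using assms(4,6) by simp
  qed
  hence mpos: "real m > 0" by simp
  have sq: "sqrt \<xi> > 0" using assms(4) by simp
  have "\<xi> \<le> (\<delta> / (4 * real m))^2" using assms(6) by (simp add: power_divide power_mult_distrib)
  hence "sqrt \<xi> \<le> sqrt ((\<delta> / (4 * real m))^2)" by (rule real_sqrt_le_mono)
  hence sqle: "sqrt \<xi> \<le> \<delta> / (4 * real m)" using assms(2) mpos by simp
  have Ndiv: "real N \<ge> real m / sqrt \<xi>" unfolding N_def by linarith
  hence Nsq: "real N * sqrt \<xi> \<ge> real m" using sq by (simp add: field_simps)
  have sum_le: "(\<Sum>j\<le>N. border m L out (\<delta>/2 + 2*real j*\<xi>) \<xi>) \<le> 2 * real m"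
    by (rule sum_border_bound[OF assms(1,4)])
  show False
  proof (cases "m = 1")
    case True
    have "sqrt \<xi> \<le> 1/8" using sqle assms(3) True by simp
    hence "1 / sqrt \<xi> \<ge> 8" using sq by (simp add: field_simps)
    hence "real N \<ge> 8" using Ndiv True by simp
    have inb: "inwin (\<delta>/2 + 2 * real j * \<xi>) \<xi> (val L out [])" if "j \<le> N" for j
    proof -
      have "border m L out (\<delta>/2 + 2 * real j * \<xi>) \<xi> > 0"
        using less_trans[OF sq] bad[OF that] True by simp
      hence "desc (Border m L out (\<delta>/2 + 2 * real j * \<xi>) \<xi>) \<noteq> {}"
        unfolding border_def by (metis measure_empty less_irrefl)
      then obtain u where "u \<in> Border m L out (\<delta>/2 + 2 * real j * \<xi>) \<xi>"
        unfolding desc_def by auto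
      thus ?thesis using True by (auto simp: Border_inwin)
    qed
    have "(\<Sum>j\<le>N. (if inwin (\<delta>/2 + 2 * real j * \<xi>) \<xi> (val L out []) then 1 else 0 :: real)) = real N + 1"
      using inb by simp
    moreover have "(\<Sum>j\<le>N. (if inwin (\<delta>/2 + 2 * real j * \<xi>) \<xi> (val L out []) then 1 else 0 :: real)) \<le> 2"
      by (rule window_count[OF assms(4)])
    ultimately show False using \<open>real N \<ge> 8\<close> by simp
  next
    case False
    hence m2: "real m \<ge> 2" using m0 by simp
    have "(\<Sum>j\<le>N. real m * sqrt \<xi>) < (\<Sum>j\<le>N. border m L out (\<delta>/2 + 2*real j*\<xi>) \<xi>)"
      by (rule sum_strict_mono) (auto intro: bad)
    moreover have "(\<Sum>j\<le>N. real m * sqrt \<xi>) = (real N + 1) * (real m * sqrt \<xi>)" by simp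
    moreover have "(real N + 1) * (real m * sqrt \<xi>) \<ge> real m * real m"
    proof -
      have "(real N + 1) * (real m * sqrt \<xi>) \<ge> real m * (real N * sqrt \<xi>)"
        using sq mpos by (simp add: algebra_simps)
      moreover have "real m * (real N * sqrt \<xi>) \<ge> real m * real m"
        using Nsq mpos by simp
      ultimately show ?thesis by linarith
    qed
    moreover have "real m * real m \<ge> 2 * real m" using m2 by simp
    ultimately show False using sum_le by linarith
  qed
qed

end
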